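(* Let $h,h'\colon Z\to X$ and $f,g\colon X\to Y$ be continuous maps such that $f\circ h'\simeq g\circ h'$. Then $\mathrm{D}(f\circ h,g\circ h)\leq \mathrm{D}(h,h')$.
   Context: For continuous maps $f,g\colon X\to Y$, the homotopic distance $\mathrm{D}(f,g)$ is the least integer $n\geq 0$ such that there is an open cover $\{U_0,\dots,U_n\}$ of $X$ with $f|_{U_j}\simeq g|_{U_j}$ for all $j$; if no such cover exists, $\mathrm{D}(f,g)=\infty$. *)

theory Defs
  imports "HOL-Analysis.Analysis" "HOL-Library.Extended_Nat"
begin

text \<open>Homotopic distance D(f,g): least n such that X has an open cover U_0,...,U_n
  with f restricted to U_j homotopic to g restricted to U_j for every j;
  infinity if no such cover exists (Inf of the empty set of enat is infinity).\<close>
definition homotopic_distance ::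
  "'a topology \<Rightarrow> 'b topology \<Rightarrow> ('a \<Rightarrow> 'b) \<Rightarrow> ('a \<Rightarrow> 'b) \<Rightarrow> enat" where
  "homotopic_distance X Y f g =
     (INF n \<in> {n::nat. \<exists>U :: nat \<Rightarrow> 'a set.
          (\<forall>j\<le>n. openin X (U j)) \<and>
          topspace X \<subseteq> (\<Union>j\<le>n. U j) \<and>
          (\<forall>j\<le>n. homotopic_with (\<lambda>_. True) (subtopology X (U j)) Y f g)}. enat n)"

end

theory Submission
  imports Defs
begin

theorem proposition3p8:
  fixes Z :: "'z topology" and X :: "'x topology" and Y :: "'y topology"
    and h h' :: "'z \<Rightarrow> 'x" and f g :: "'x \<Rightarrow> 'y"
  assumes "continuous_map Z X h" and "continuous_map Z X h'"
    and "continuous_map X Y f" and "continuous_map X Y g"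
    and "homotopic_with (\<lambda>_. True) Z Y (f \<circ> h') (g \<circ> h')"
  shows "homotopic_distance Z Y (f \<circ> h) (g \<circ> h) \<le> homotopic_distance Z X h h'"
proof -
  have key: "homotopic_with (\<lambda>_. True) (subtopology Z V) Y (f \<circ> h) (g \<circ> h)"
    if H: "homotopic_with (\<lambda>_. True) (subtopology Z V) X h h'" for V
  proof -
    have 1: "homotopic_with (\<lambda>_. True) (subtopology Z V) Y (f \<circ> h) (f \<circ> h')"
      by (rule homotopic_with_compose_continuous_map_left[OF H assms(3)]) auto
    have 2: "homotopic_with (\<lambda>_. True) (subtopology Z V) Y (g \<circ> h) (g \<circ> h')"
      by (rule homotopic_with_compose_continuous_map_left[OF H assms(4)]) auto
    have 3: "homotopic_with (\<lambda>_. True) (subtopology Z V) Y (f \<circ> h') (g \<circ> h')"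
      using homotopic_from_subtopology[OF assms(5)] .
    show ?thesis
      using homotopic_with_trans[OF homotopic_with_trans[OF 1 3] homotopic_with_symD[OF 2]] .
  qed
  show ?thesis
    unfolding homotopic_distance_def
    apply (rule INF_superset_mono)
    using key by blast+
qed

end
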